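(* Let $\mathcal{D}$ be a category with pullbacks and $(\mathcal{E},\mathcal{M})$ a stable orthogonal factorization system on $\mathcal{D}$, and let $\mathcal{A}$ be any category. Then the componentwise lifting of $(\mathcal{E},\mathcal{M})$ to $[\mathcal{A},\mathcal{D}]$ (natural transformations all of whose components are in $\mathcal{E}$, respectively in $\mathcal{M}$) restricts to an orthogonal factorization system on $\mathrm{CartNt}[\mathcal{A},\mathcal{D}]$, the category of all functors $\mathcal{A}\to\mathcal{D}$ and cartesian natural transformations.
   Context: An orthogonal factorization system $(\mathcal{E},\mathcal{M})$: both classes contain all isomorphisms and are closed under composition; each commuting square $g\circ e = m\circ f$ with $e\in\mathcal{E}$, $m\in\mathcal{M}$ has a unique diagonal $d$ with $d\circ e=f$, $m\circ d=g$; every morphism factors as $m\circ e$ with $e\in\mathcal{E}$, $m\in\mathcal{M}$. It is stable if $\mathcal{E}$ is closed under pullback along arbitrary morphisms. The componentwise lifting is an orthogonal factorization system on $[\mathcal{A},\mathcal{D}]$, with factorizations computed componentwise. A natural transformation is cartesian if all of its naturality squares are pullbacks. *)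

theory Defs
  imports Main
begin

record ('o, 'm) cat =
  Obj :: "'o set"
  Arr :: "'m set"
  Dom :: "'m \<Rightarrow> 'o"
  Cod :: "'m \<Rightarrow> 'o"
  Cmp :: "'m \<Rightarrow> 'm \<Rightarrow> 'm"   (* Cmp C g f = g \<circ> f *)
  Idn :: "'o \<Rightarrow> 'm"

definition category :: "('o, 'm) cat \<Rightarrow> bool" where
  "category C \<longleftrightarrow>
     (\<forall>f\<in>Arr C. Dom C f \<in> Obj C \<and> Cod C f \<in> Obj C)
   \<and> (\<forall>a\<in>Obj C. Idn C a \<in> Arr C \<and> Dom C (Idn C a) = a \<and> Cod C (Idn C a) = a)
   \<and> (\<forall>f\<in>Arr C. \<forall>g\<in>Arr C. Cod C f = Dom C g \<longrightarrow>
        Cmp C g f \<in> Arr C \<and> Dom C (Cmp C g f) = Dom C f \<and> Cod C (Cmp C g f) = Cod C g)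
   \<and> (\<forall>f\<in>Arr C. Cmp C f (Idn C (Dom C f)) = f \<and> Cmp C (Idn C (Cod C f)) f = f)
   \<and> (\<forall>f\<in>Arr C. \<forall>g\<in>Arr C. \<forall>h\<in>Arr C. Cod C f = Dom C g \<longrightarrow> Cod C g = Dom C h \<longrightarrow>
        Cmp C h (Cmp C g f) = Cmp C (Cmp C h g) f)"

definition iso :: "('o, 'm) cat \<Rightarrow> 'm \<Rightarrow> bool" where
  "iso C f \<longleftrightarrow> f \<in> Arr C \<and> (\<exists>g\<in>Arr C. Dom C g = Cod C f \<and> Cod C g = Dom C f \<and>
     Cmp C g f = Idn C (Dom C f) \<and> Cmp C f g = Idn C (Cod C f))"

text \<open>Square  p : P \<rightarrow> X, q : P \<rightarrow> Y, f : X \<rightarrow> Z, g : Y \<rightarrow> Z with f p = g q is a pullback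
  of the cospan (f, g). Then q is the pullback of f along g.\<close>
definition is_pullback :: "('o, 'm) cat \<Rightarrow> 'm \<Rightarrow> 'm \<Rightarrow> 'm \<Rightarrow> 'm \<Rightarrow> bool" where
  "is_pullback C f g p q \<longleftrightarrow>
     f \<in> Arr C \<and> g \<in> Arr C \<and> p \<in> Arr C \<and> q \<in> Arr C
   \<and> Cod C f = Cod C g \<and> Dom C p = Dom C q \<and> Cod C p = Dom C f \<and> Cod C q = Dom C g
   \<and> Cmp C f p = Cmp C g q
   \<and> (\<forall>x\<in>Arr C. \<forall>y\<in>Arr C. Dom C x = Dom C y \<longrightarrow> Cod C x = Dom C f \<longrightarrow> Cod C y = Dom C g \<longrightarrow>
        Cmp C f x = Cmp C g y \<longrightarrow>
        (\<exists>!u. u \<in> Arr C \<and> Dom C u = Dom C x \<and> Cod C u = Dom C p \<and>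
              Cmp C p u = x \<and> Cmp C q u = y))"

definition has_pullbacks :: "('o, 'm) cat \<Rightarrow> bool" where
  "has_pullbacks C \<longleftrightarrow> (\<forall>f\<in>Arr C. \<forall>g\<in>Arr C. Cod C f = Cod C g \<longrightarrow>
      (\<exists>p q. is_pullback C f g p q))"

definition ofs :: "('o, 'm) cat \<Rightarrow> 'm set \<Rightarrow> 'm set \<Rightarrow> bool" where
  "ofs C E M \<longleftrightarrow>
     E \<subseteq> Arr C \<and> M \<subseteq> Arr C
   \<and> (\<forall>f. iso C f \<longrightarrow> f \<in> E) \<and> (\<forall>f. iso C f \<longrightarrow> f \<in> M)
   \<and> (\<forall>f\<in>E. \<forall>g\<in>E. Cod C f = Dom C g \<longrightarrow> Cmp C g f \<in> E)
   \<and> (\<forall>f\<in>M. \<forall>g\<in>M. Cod C f = Dom C g \<longrightarrow> Cmp C g f \<in> M)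
   \<and> (\<forall>e\<in>E. \<forall>m\<in>M. \<forall>f\<in>Arr C. \<forall>g\<in>Arr C.
        Dom C f = Dom C e \<longrightarrow> Cod C f = Dom C m \<longrightarrow> Dom C g = Cod C e \<longrightarrow> Cod C g = Cod C m \<longrightarrow>
        Cmp C g e = Cmp C m f \<longrightarrow>
        (\<exists>!d. d \<in> Arr C \<and> Dom C d = Cod C e \<and> Cod C d = Dom C m \<and>
              Cmp C d e = f \<and> Cmp C m d = g))
   \<and> (\<forall>f\<in>Arr C. \<exists>e\<in>E. \<exists>m\<in>M. Cod C e = Dom C m \<and> Cmp C m e = f)"

definition stable_ofs :: "('o, 'm) cat \<Rightarrow> 'm set \<Rightarrow> 'm set \<Rightarrow> bool" where
  "stable_ofs C E M \<longleftrightarrow> ofs C E M \<and>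
     (\<forall>f g p q. is_pullback C f g p q \<longrightarrow> f \<in> E \<longrightarrow> q \<in> E)"

record ('ao, 'am, 'do, 'dm) ftor =
  Fo :: "'ao \<Rightarrow> 'do"
  Fm :: "'am \<Rightarrow> 'dm"

definition "functor" :: "('ao, 'am) cat \<Rightarrow> ('do, 'dm) cat \<Rightarrow> ('ao, 'am, 'do, 'dm) ftor \<Rightarrow> bool" where
  "functor A D F \<longleftrightarrow>
     (\<forall>a\<in>Obj A. Fo F a \<in> Obj D) \<and> (\<forall>a. a \<notin> Obj A \<longrightarrow> Fo F a = undefined)
   \<and> (\<forall>f\<in>Arr A. Fm F f \<in> Arr D \<and> Dom D (Fm F f) = Fo F (Dom A f) \<and> Cod D (Fm F f) = Fo F (Cod A f))
   \<and> (\<forall>f. f \<notin> Arr A \<longrightarrow> Fm F f = undefined)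
   \<and> (\<forall>a\<in>Obj A. Fm F (Idn A a) = Idn D (Fo F a))
   \<and> (\<forall>f\<in>Arr A. \<forall>g\<in>Arr A. Cod A f = Dom A g \<longrightarrow> Fm F (Cmp A g f) = Cmp D (Fm F g) (Fm F f))"

record ('ao, 'am, 'do, 'dm) ntrans =
  NSrc :: "('ao, 'am, 'do, 'dm) ftor"
  NTgt :: "('ao, 'am, 'do, 'dm) ftor"
  NCmp :: "'ao \<Rightarrow> 'dm"

definition nat_trans :: "('ao, 'am) cat \<Rightarrow> ('do, 'dm) cat \<Rightarrow> ('ao, 'am, 'do, 'dm) ntrans \<Rightarrow> bool" where
  "nat_trans A D \<eta> \<longleftrightarrow>
     functor A D (NSrc \<eta>) \<and> functor A D (NTgt \<eta>)
   \<and> (\<forall>a\<in>Obj A. NCmp \<eta> a \<in> Arr D \<and> Dom D (NCmp \<eta> a) = Fo (NSrc \<eta>) a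
                 \<and> Cod D (NCmp \<eta> a) = Fo (NTgt \<eta>) a)
   \<and> (\<forall>a. a \<notin> Obj A \<longrightarrow> NCmp \<eta> a = undefined)
   \<and> (\<forall>f\<in>Arr A. Cmp D (NCmp \<eta> (Cod A f)) (Fm (NSrc \<eta>) f)
                 = Cmp D (Fm (NTgt \<eta>) f) (NCmp \<eta> (Dom A f)))"

definition cartesian :: "('ao, 'am) cat \<Rightarrow> ('do, 'dm) cat \<Rightarrow> ('ao, 'am, 'do, 'dm) ntrans \<Rightarrow> bool" where
  "cartesian A D \<eta> \<longleftrightarrow> (\<forall>f\<in>Arr A.
     is_pullback D (Fm (NTgt \<eta>) f) (NCmp \<eta> (Cod A f)) (NCmp \<eta> (Dom A f)) (Fm (NSrc \<eta>) f))"

definition CartNt :: "('ao, 'am) cat \<Rightarrow> ('do, 'dm) cat \<Rightarrow>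
    (('ao, 'am, 'do, 'dm) ftor, ('ao, 'am, 'do, 'dm) ntrans) cat" where
  "CartNt A D = \<lparr>
     Obj = {F. functor A D F},
     Arr = {\<eta>. nat_trans A D \<eta> \<and> cartesian A D \<eta>},
     Dom = NSrc,
     Cod = NTgt,
     Cmp = (\<lambda>\<tau> \<sigma>. \<lparr>NSrc = NSrc \<sigma>, NTgt = NTgt \<tau>,
              NCmp = (\<lambda>a. if a \<in> Obj A then Cmp D (NCmp \<tau> a) (NCmp \<sigma> a) else undefined)\<rparr>),
     Idn = (\<lambda>F. \<lparr>NSrc = F, NTgt = F,
              NCmp = (\<lambda>a. if a \<in> Obj A then Idn D (Fo F a) else undefined)\<rparr>) \<rparr>"

definition lift_class :: "('ao, 'am) cat \<Rightarrow> 'dm set \<Rightarrow> ('ao, 'am, 'do, 'dm) ntrans set" where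
  "lift_class A K = {\<eta>. \<forall>a\<in>Obj A. NCmp \<eta> a \<in> K}"

end

theory Submission
  imports Defs
begin

locale catl = fixes C :: "('o,'m) cat" assumes cat: "category C"
begin

lemma dom_obj[simp]: "f \<in> Arr C \<Longrightarrow> Dom C f \<in> Obj C"
  using cat unfolding category_def by blast
lemma cod_obj[simp]: "f \<in> Arr C \<Longrightarrow> Cod C f \<in> Obj C"
  using cat unfolding category_def by blast
lemma idn_arr[simp]: "a \<in> Obj C \<Longrightarrow> Idn C a \<in> Arr C"
  using cat unfolding category_def by blast
lemma idn_dom[simp]: "a \<in> Obj C \<Longrightarrow> Dom C (Idn C a) = a"
  using cat unfolding category_def by blast
lemma idn_cod[simp]: "a \<in> Obj C \<Longrightarrow> Cod C (Idn C a) = a"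
  using cat unfolding category_def by blast
lemma cmp_arr[simp]: "f \<in> Arr C \<Longrightarrow> g \<in> Arr C \<Longrightarrow> Cod C f = Dom C g \<Longrightarrow> Cmp C g f \<in> Arr C"
  using cat unfolding category_def by blast
lemma cmp_dom[simp]: "f \<in> Arr C \<Longrightarrow> g \<in> Arr C \<Longrightarrow> Cod C f = Dom C g \<Longrightarrow> Dom C (Cmp C g f) = Dom C f"
  using cat unfolding category_def by blast
lemma cmp_cod[simp]: "f \<in> Arr C \<Longrightarrow> g \<in> Arr C \<Longrightarrow> Cod C f = Dom C g \<Longrightarrow> Cod C (Cmp C g f) = Cod C g"
  using cat unfolding category_def by blast
lemma idr[simp]: "f \<in> Arr C \<Longrightarrow> Cmp C f (Idn C (Dom C f)) = f"
  using cat unfolding category_def by blast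
lemma idl[simp]: "f \<in> Arr C \<Longrightarrow> Cmp C (Idn C (Cod C f)) f = f"
  using cat unfolding category_def by blast
lemma assoc: "f \<in> Arr C \<Longrightarrow> g \<in> Arr C \<Longrightarrow> h \<in> Arr C \<Longrightarrow> Cod C f = Dom C g \<Longrightarrow> Cod C g = Dom C h \<Longrightarrow>
   Cmp C h (Cmp C g f) = Cmp C (Cmp C h g) f"
  using cat unfolding category_def by blast

lemma pbD:
  assumes "is_pullback C f g p q"
  shows "f \<in> Arr C" "g \<in> Arr C" "p \<in> Arr C" "q \<in> Arr C"
   "Cod C f = Cod C g" "Dom C p = Dom C q" "Cod C p = Dom C f" "Cod C q = Dom C g"
   "Cmp C f p = Cmp C g q"
  using assms unfolding is_pullback_def by blast+

lemma pb_ex: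
  assumes "is_pullback C f g p q" "x \<in> Arr C" "y \<in> Arr C" "Dom C x = Dom C y"
    "Cod C x = Dom C f" "Cod C y = Dom C g" "Cmp C f x = Cmp C g y"
  obtains u where "u \<in> Arr C" "Dom C u = Dom C x" "Cod C u = Dom C p" "Cmp C p u = x" "Cmp C q u = y"
  using assms unfolding is_pullback_def by metis

lemma pb_uniq:
  assumes "is_pullback C f g p q" "u \<in> Arr C" "v \<in> Arr C" "Dom C u = Dom C v"
    "Cod C u = Dom C p" "Cod C v = Dom C p" "Cmp C p u = Cmp C p v" "Cmp C q u = Cmp C q v"
  shows "u = v"
proof -
  note pb = pbD[OF assms(1)]
  let ?x = "Cmp C p u" and ?y = "Cmp C q u"
  have "Cmp C f ?x = Cmp C g ?y"
    using pb assms by (metis assoc)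
  moreover have "?x \<in> Arr C" "?y \<in> Arr C" "Dom C ?x = Dom C ?y" "Cod C ?x = Dom C f" "Cod C ?y = Dom C g"
    using pb assms by auto
  ultimately have "\<exists>!w. w \<in> Arr C \<and> Dom C w = Dom C ?x \<and> Cod C w = Dom C p \<and> Cmp C p w = ?x \<and> Cmp C q w = ?y"
    using assms(1) unfolding is_pullback_def by blast
  then show ?thesis using assms pb by auto
qed

lemma pbI:
  assumes "f \<in> Arr C" "g \<in> Arr C" "p \<in> Arr C" "q \<in> Arr C"
   "Cod C f = Cod C g" "Dom C p = Dom C q" "Cod C p = Dom C f" "Cod C q = Dom C g"
   "Cmp C f p = Cmp C g q"
   and ex: "\<And>x y. x \<in> Arr C \<Longrightarrow> y \<in> Arr C \<Longrightarrow> Dom C x = Dom C y \<Longrightarrow> Cod C x = Dom C f \<Longrightarrow> Cod C y = Dom C g \<Longrightarrow>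
        Cmp C f x = Cmp C g y \<Longrightarrow> \<exists>u. u \<in> Arr C \<and> Dom C u = Dom C x \<and> Cod C u = Dom C p \<and> Cmp C p u = x \<and> Cmp C q u = y"
   and un: "\<And>u v. u \<in> Arr C \<Longrightarrow> v \<in> Arr C \<Longrightarrow> Dom C u = Dom C v \<Longrightarrow> Cod C u = Dom C p \<Longrightarrow> Cod C v = Dom C p \<Longrightarrow>
        Cmp C p u = Cmp C p v \<Longrightarrow> Cmp C q u = Cmp C q v \<Longrightarrow> u = v"
  shows "is_pullback C f g p q"
  unfolding is_pullback_def
proof (intro conjI ballI impI assms(1-9))
  fix x y assume h: "x \<in> Arr C" "y \<in> Arr C" "Dom C x = Dom C y" "Cod C x = Dom C f" "Cod C y = Dom C g"
        "Cmp C f x = Cmp C g y"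
  from ex[OF h] obtain u where u: "u \<in> Arr C \<and> Dom C u = Dom C x \<and> Cod C u = Dom C p \<and> Cmp C p u = x \<and> Cmp C q u = y" by blast
  show "\<exists>!u. u \<in> Arr C \<and> Dom C u = Dom C x \<and> Cod C u = Dom C p \<and> Cmp C p u = x \<and> Cmp C q u = y"
  proof (rule ex1I[of _ u])
    show "u \<in> Arr C \<and> Dom C u = Dom C x \<and> Cod C u = Dom C p \<and> Cmp C p u = x \<and> Cmp C q u = y" by fact
    fix v assume "v \<in> Arr C \<and> Dom C v = Dom C x \<and> Cod C v = Dom C p \<and> Cmp C p v = x \<and> Cmp C q v = y"
    then show "v = u" using u un[of v u] by auto
  qed
qed

lemma pb_sym: assumes "is_pullback C f g p q" shows "is_pullback C g f q p"
proof -
  note pb = pbD[OF assms]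
  show ?thesis
  proof (rule pbI)
    fix x y assume h: "x \<in> Arr C" "y \<in> Arr C" "Dom C x = Dom C y" "Cod C x = Dom C g" "Cod C y = Dom C f"
        "Cmp C g x = Cmp C f y"
    obtain u where "u \<in> Arr C" "Dom C u = Dom C y" "Cod C u = Dom C p" "Cmp C p u = y" "Cmp C q u = x"
      using pb_ex[OF assms, of y x] h by metis
    then show "\<exists>u. u \<in> Arr C \<and> Dom C u = Dom C x \<and> Cod C u = Dom C q \<and> Cmp C q u = x \<and> Cmp C p u = y"
      using h pb by metis
  next
    fix u v assume "u \<in> Arr C" "v \<in> Arr C" "Dom C u = Dom C v" "Cod C u = Dom C q" "Cod C v = Dom C q"
        "Cmp C q u = Cmp C q v" "Cmp C p u = Cmp C p v"
    then show "u = v" using pb_uniq[OF assms] pb by metis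
  qed (use pb in auto)
qed



lemma pb_paste:
  assumes b: "is_pullback C f g p q" and t: "is_pullback C q g' p' q'"
  shows "is_pullback C f (Cmp C g g') (Cmp C p p') q'"
proof -
  note B = pbD[OF b] and T = pbD[OF t]
  have ty: "Cod C g = Cod C f" "Dom C q = Dom C p" "Cod C p = Dom C f" "Cod C q = Dom C g"
    "Cod C g' = Dom C g" "Dom C q' = Dom C p'" "Cod C p' = Dom C p" "Cod C q' = Dom C g'"
    using B T by auto
  note Bt = B(1-4) T(1-4) ty and Tt = ty
  show ?thesis
  proof (rule pbI)
    show "Cmp C f (Cmp C p p') = Cmp C (Cmp C g g') q'"
    proof -
      have "Cmp C f (Cmp C p p') = Cmp C (Cmp C f p) p'" by (rule assoc) (use Bt Tt in simp_all)
      also have "\<dots> = Cmp C (Cmp C g q) p'" using B(9) by simp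
      also have "\<dots> = Cmp C g (Cmp C q p')" by (rule assoc[symmetric]) (use Bt Tt in simp_all)
      also have "\<dots> = Cmp C g (Cmp C g' q')" using T(9) by simp
      also have "\<dots> = Cmp C (Cmp C g g') q'" by (rule assoc) (use Bt Tt in simp_all)
      finally show ?thesis .
    qed
  next
    fix x y assume h: "x \<in> Arr C" "y \<in> Arr C" "Dom C x = Dom C y" "Cod C x = Dom C f"
      "Cod C y = Dom C (Cmp C g g')" and h6: "Cmp C f x = Cmp C (Cmp C g g') y"
    have hy: "Cod C y = Dom C g'" using h Bt Tt by auto
    have "Cmp C g (Cmp C g' y) = Cmp C (Cmp C g g') y" by (rule assoc) (use h hy Bt Tt in simp_all)
    with h6 have e1: "Cmp C f x = Cmp C g (Cmp C g' y)" by simp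
    obtain u1 where u1: "u1 \<in> Arr C" "Dom C u1 = Dom C x" "Cod C u1 = Dom C p" "Cmp C p u1 = x" "Cmp C q u1 = Cmp C g' y"
      by (rule pb_ex[OF b, of x "Cmp C g' y"]) (use h hy Bt Tt e1 in simp_all)
    obtain u2 where u2: "u2 \<in> Arr C" "Dom C u2 = Dom C u1" "Cod C u2 = Dom C p'" "Cmp C p' u2 = u1" "Cmp C q' u2 = y"
      by (rule pb_ex[OF t, of u1 y]) (use h hy Bt Tt u1 in simp_all)
    show "\<exists>u. u \<in> Arr C \<and> Dom C u = Dom C x \<and> Cod C u = Dom C (Cmp C p p') \<and> Cmp C (Cmp C p p') u = x \<and> Cmp C q' u = y"
    proof (rule exI[of _ u2], intro conjI)
      have "Cmp C (Cmp C p p') u2 = Cmp C p (Cmp C p' u2)" by (rule assoc[symmetric]) (use u1(1-3) u2(1-3) Bt Tt in simp_all)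
      then show "Cmp C (Cmp C p p') u2 = x" using u1(4) u2(4) by simp
    qed (use u1(1-3) u2 Bt Tt in simp_all)
  next
    fix u v assume h: "u \<in> Arr C" "v \<in> Arr C" "Dom C u = Dom C v" "Cod C u = Dom C (Cmp C p p')" "Cod C v = Dom C (Cmp C p p')"
       and h6: "Cmp C (Cmp C p p') u = Cmp C (Cmp C p p') v" and h7: "Cmp C q' u = Cmp C q' v"
    have cu: "Cod C u = Dom C p'" "Cod C v = Dom C p'" using h Bt Tt by auto
    have "Cmp C p' u = Cmp C p' v"
    proof (rule pb_uniq[OF b])
      have "Cmp C p (Cmp C p' u) = Cmp C (Cmp C p p') u" by (rule assoc) (use h cu Bt Tt in simp_all)
      moreover have "Cmp C p (Cmp C p' v) = Cmp C (Cmp C p p') v" by (rule assoc) (use h cu Bt Tt in simp_all)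
      ultimately show "Cmp C p (Cmp C p' u) = Cmp C p (Cmp C p' v)" using h6 by simp
      have "Cmp C q (Cmp C p' u) = Cmp C (Cmp C q p') u" by (rule assoc) (use h cu Bt Tt in simp_all)
      also have "\<dots> = Cmp C (Cmp C g' q') u" using T(9) by simp
      also have "\<dots> = Cmp C g' (Cmp C q' u)" by (rule assoc[symmetric]) (use h cu Bt Tt in simp_all)
      finally have 1: "Cmp C q (Cmp C p' u) = Cmp C g' (Cmp C q' u)" .
      have "Cmp C q (Cmp C p' v) = Cmp C (Cmp C q p') v" by (rule assoc) (use h cu Bt Tt in simp_all)
      also have "\<dots> = Cmp C (Cmp C g' q') v" using T(9) by simp
      also have "\<dots> = Cmp C g' (Cmp C q' v)" by (rule assoc[symmetric]) (use h cu Bt Tt in simp_all)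
      finally have 2: "Cmp C q (Cmp C p' v) = Cmp C g' (Cmp C q' v)" .
      show "Cmp C q (Cmp C p' u) = Cmp C q (Cmp C p' v)" using 1 2 h7 by simp
    qed (use h cu Bt Tt in simp_all)
    then show "u = v" using pb_uniq[OF t, of u v] h cu h7 Bt Tt by simp
  qed (use Bt Tt in simp_all)
qed

lemma pb_cancel:
  assumes b: "is_pullback C f g p q" and c: "is_pullback C f (Cmp C g g') (Cmp C p p') q'"
   and a: "g' \<in> Arr C" "p' \<in> Arr C" "q' \<in> Arr C" "Cod C g' = Dom C g" "Cod C p' = Dom C p"
     "Dom C p' = Dom C q'" "Cod C q' = Dom C g'" and sq: "Cmp C q p' = Cmp C g' q'"
  shows "is_pullback C q g' p' q'"
proof -
  note B = pbD[OF b] and Cc = pbD[OF c]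
  show ?thesis
  proof (rule pbI)
    fix x y assume h: "x \<in> Arr C" "y \<in> Arr C" "Dom C x = Dom C y" "Cod C x = Dom C q"
      "Cod C y = Dom C g'" "Cmp C q x = Cmp C g' y"
    have e: "Cmp C f (Cmp C p x) = Cmp C (Cmp C g g') y"
      using h a B by (metis assoc)
    obtain u where u: "u \<in> Arr C" "Dom C u = Dom C (Cmp C p x)" "Cod C u = Dom C (Cmp C p p')"
       "Cmp C (Cmp C p p') u = Cmp C p x" "Cmp C q' u = y"
      using pb_ex[OF c, of "Cmp C p x" y] h a B e by auto
    have cu: "Cod C u = Dom C p'" using u a B by auto
    have "Cmp C p' u = x"
    proof (rule pb_uniq[OF b])
      show "Cmp C p (Cmp C p' u) = Cmp C p x" using u cu a B by (simp add: assoc)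
      have "Cmp C q (Cmp C p' u) = Cmp C g' (Cmp C q' u)" using u cu a B sq by (metis assoc)
      then show "Cmp C q (Cmp C p' u) = Cmp C q x" using u h by simp
    qed (use h u cu a B in auto)
    then show "\<exists>u. u \<in> Arr C \<and> Dom C u = Dom C x \<and> Cod C u = Dom C p' \<and> Cmp C p' u = x \<and> Cmp C q' u = y"
      using u cu h a B by (intro exI[of _ u]) auto
  next
    fix u v assume h: "u \<in> Arr C" "v \<in> Arr C" "Dom C u = Dom C v" "Cod C u = Dom C p'" "Cod C v = Dom C p'"
        "Cmp C p' u = Cmp C p' v" "Cmp C q' u = Cmp C q' v"
    show "u = v"
    proof (rule pb_uniq[OF c])
      show "Cmp C (Cmp C p p') u = Cmp C (Cmp C p p') v" using h a B by (metis assoc)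
    qed (use h a B in auto)
  qed (use a B sq in auto)
qed


lemma pb_iso:
  assumes b: "is_pullback C f g p q" and k: "k \<in> Arr C" "l \<in> Arr C" "Cod C k = Dom C p" "Dom C l = Dom C p"
    "Cod C l = Dom C k" "Cmp C l k = Idn C (Dom C k)" "Cmp C k l = Idn C (Dom C p)"
  shows "is_pullback C f g (Cmp C p k) (Cmp C q k)"
proof -
  note B = pbD[OF b]
  show ?thesis
  proof (rule pbI)
    fix x y assume h: "x \<in> Arr C" "y \<in> Arr C" "Dom C x = Dom C y" "Cod C x = Dom C f"
      "Cod C y = Dom C g" "Cmp C f x = Cmp C g y"
    obtain u where u: "u \<in> Arr C" "Dom C u = Dom C x" "Cod C u = Dom C p" "Cmp C p u = x" "Cmp C q u = y"
      using pb_ex[OF b h] .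
    have kl: "Cmp C k (Cmp C l u) = u" using u k B by (metis assoc idl)
    show "\<exists>w. w \<in> Arr C \<and> Dom C w = Dom C x \<and> Cod C w = Dom C (Cmp C p k) \<and> Cmp C (Cmp C p k) w = x \<and> Cmp C (Cmp C q k) w = y"
      apply (rule exI[of _ "Cmp C l u"]) using u k B kl by (auto simp: assoc[symmetric])
  next
    fix u v assume h: "u \<in> Arr C" "v \<in> Arr C" "Dom C u = Dom C v" "Cod C u = Dom C (Cmp C p k)" "Cod C v = Dom C (Cmp C p k)"
        "Cmp C (Cmp C p k) u = Cmp C (Cmp C p k) v" "Cmp C (Cmp C q k) u = Cmp C (Cmp C q k) v"
    have "Cmp C k u = Cmp C k v"
    proof (rule pb_uniq[OF b])
      show "Cmp C p (Cmp C k u) = Cmp C p (Cmp C k v)" using h k B by (simp add: assoc)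
      show "Cmp C q (Cmp C k u) = Cmp C q (Cmp C k v)" using h k B by (simp add: assoc)
    qed (use h k B in auto)
    then have "Cmp C l (Cmp C k u) = Cmp C l (Cmp C k v)" by simp
    then show "u = v" using h k B by (metis assoc idl cmp_dom)
  qed (use k B in \<open>auto simp: assoc\<close>)
qed

end

locale ofsl = catl C for C :: "('o,'m) cat" + fixes E M assumes ofs: "ofs C E M"
begin
lemma E_arr: "e \<in> E \<Longrightarrow> e \<in> Arr C" using ofs unfolding ofs_def by blast
lemma M_arr: "m \<in> M \<Longrightarrow> m \<in> Arr C" using ofs unfolding ofs_def by blast
lemma iso_E: "iso C f \<Longrightarrow> f \<in> E" using ofs unfolding ofs_def by blast
lemma iso_M: "iso C f \<Longrightarrow> f \<in> M" using ofs unfolding ofs_def by blast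
lemma E_comp: "f \<in> E \<Longrightarrow> g \<in> E \<Longrightarrow> Cod C f = Dom C g \<Longrightarrow> Cmp C g f \<in> E" using ofs unfolding ofs_def by blast
lemma M_comp: "f \<in> M \<Longrightarrow> g \<in> M \<Longrightarrow> Cod C f = Dom C g \<Longrightarrow> Cmp C g f \<in> M" using ofs unfolding ofs_def by blast
lemma fact: assumes "f \<in> Arr C" obtains e m where "e \<in> E" "m \<in> M" "Cod C e = Dom C m" "Cmp C m e = f"
  using ofs assms unfolding ofs_def by blast
lemma diag_ex:
  assumes "e \<in> E" "m \<in> M" "f \<in> Arr C" "g \<in> Arr C" "Dom C f = Dom C e" "Cod C f = Dom C m"
    "Dom C g = Cod C e" "Cod C g = Cod C m" "Cmp C g e = Cmp C m f"
  obtains d where "d \<in> Arr C" "Dom C d = Cod C e" "Cod C d = Dom C m" "Cmp C d e = f" "Cmp C m d = g"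
  using ofs assms unfolding ofs_def by metis
lemma diag_uniq:
  assumes e: "e \<in> E" and m: "m \<in> M" and d: "d \<in> Arr C" "d' \<in> Arr C" "Dom C d = Cod C e" "Cod C d = Dom C m"
    "Dom C d' = Cod C e" "Cod C d' = Dom C m" and eq: "Cmp C d e = Cmp C d' e" "Cmp C m d = Cmp C m d'"
  shows "d = d'"
proof -
  have ea: "e \<in> Arr C" and ma: "m \<in> Arr C" using e m E_arr M_arr by auto
  let ?f = "Cmp C d e" and ?g = "Cmp C m d"
  have "?f \<in> Arr C" "?g \<in> Arr C" "Dom C ?f = Dom C e" "Cod C ?f = Dom C m" "Dom C ?g = Cod C e" "Cod C ?g = Cod C m"
    using ea ma d by auto
  moreover have "Cmp C ?g e = Cmp C m ?f" using ea ma d by (simp add: assoc)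
  ultimately have "\<exists>!x. x \<in> Arr C \<and> Dom C x = Cod C e \<and> Cod C x = Dom C m \<and> Cmp C x e = ?f \<and> Cmp C m x = ?g"
    using ofs e m unfolding ofs_def by blast
  then show ?thesis using d eq by metis
qed
end


lemma CartNt_simps[simp]:
  "Obj (CartNt A D) = {F. functor A D F}"
  "Arr (CartNt A D) = {\<eta>. nat_trans A D \<eta> \<and> cartesian A D \<eta>}"
  "Dom (CartNt A D) = NSrc" "Cod (CartNt A D) = NTgt"
  "Cmp (CartNt A D) \<tau> \<sigma> = \<lparr>NSrc = NSrc \<sigma>, NTgt = NTgt \<tau>,
              NCmp = (\<lambda>a. if a \<in> Obj A then Cmp D (NCmp \<tau> a) (NCmp \<sigma> a) else undefined)\<rparr>"
  "Idn (CartNt A D) F = \<lparr>NSrc = F, NTgt = F,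
              NCmp = (\<lambda>a. if a \<in> Obj A then Idn D (Fo F a) else undefined)\<rparr>"
  by (simp_all add: CartNt_def)

context
  fixes A :: "('ao,'am) cat" and D :: "('do,'dm) cat" and F :: "('ao,'am,'do,'dm) ftor"
  assumes F: "functor A D F"
begin
lemma fo_obj: "a \<in> Obj A \<Longrightarrow> Fo F a \<in> Obj D" using F unfolding functor_def by blast
lemma fo_undef: "a \<notin> Obj A \<Longrightarrow> Fo F a = undefined" using F unfolding functor_def by blast
lemma fm_arr: "u \<in> Arr A \<Longrightarrow> Fm F u \<in> Arr D" using F unfolding functor_def by blast
lemma fm_dom: "u \<in> Arr A \<Longrightarrow> Dom D (Fm F u) = Fo F (Dom A u)" using F unfolding functor_def by blast
lemma fm_cod: "u \<in> Arr A \<Longrightarrow> Cod D (Fm F u) = Fo F (Cod A u)" using F unfolding functor_def by blast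
lemma fm_undef: "u \<notin> Arr A \<Longrightarrow> Fm F u = undefined" using F unfolding functor_def by blast
lemma fm_idn: "a \<in> Obj A \<Longrightarrow> Fm F (Idn A a) = Idn D (Fo F a)" using F unfolding functor_def by blast
lemma fm_cmp: "u \<in> Arr A \<Longrightarrow> v \<in> Arr A \<Longrightarrow> Cod A u = Dom A v \<Longrightarrow> Fm F (Cmp A v u) = Cmp D (Fm F v) (Fm F u)"
  using F unfolding functor_def by blast
end

context
  fixes A :: "('ao,'am) cat" and D :: "('do,'dm) cat" and \<eta> :: "('ao,'am,'do,'dm) ntrans"
  assumes N: "nat_trans A D \<eta>"
begin
lemma nt_src: "functor A D (NSrc \<eta>)" using N unfolding nat_trans_def by blast
lemma nt_tgt: "functor A D (NTgt \<eta>)" using N unfolding nat_trans_def by blast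
lemma nt_arr: "a \<in> Obj A \<Longrightarrow> NCmp \<eta> a \<in> Arr D" using N unfolding nat_trans_def by blast
lemma nt_dom: "a \<in> Obj A \<Longrightarrow> Dom D (NCmp \<eta> a) = Fo (NSrc \<eta>) a" using N unfolding nat_trans_def by blast
lemma nt_cod: "a \<in> Obj A \<Longrightarrow> Cod D (NCmp \<eta> a) = Fo (NTgt \<eta>) a" using N unfolding nat_trans_def by blast
lemma nt_undef: "a \<notin> Obj A \<Longrightarrow> NCmp \<eta> a = undefined" using N unfolding nat_trans_def by blast
lemma nt_nat: "u \<in> Arr A \<Longrightarrow> Cmp D (NCmp \<eta> (Cod A u)) (Fm (NSrc \<eta>) u) = Cmp D (Fm (NTgt \<eta>) u) (NCmp \<eta> (Dom A u))"
  using N unfolding nat_trans_def by blast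
end

lemma ntI:
  assumes "functor A D (NSrc \<eta>)" "functor A D (NTgt \<eta>)"
   "\<And>a. a \<in> Obj A \<Longrightarrow> NCmp \<eta> a \<in> Arr D" "\<And>a. a \<in> Obj A \<Longrightarrow> Dom D (NCmp \<eta> a) = Fo (NSrc \<eta>) a"
   "\<And>a. a \<in> Obj A \<Longrightarrow> Cod D (NCmp \<eta> a) = Fo (NTgt \<eta>) a"
   "\<And>a. a \<notin> Obj A \<Longrightarrow> NCmp \<eta> a = undefined"
   "\<And>u. u \<in> Arr A \<Longrightarrow> Cmp D (NCmp \<eta> (Cod A u)) (Fm (NSrc \<eta>) u) = Cmp D (Fm (NTgt \<eta>) u) (NCmp \<eta> (Dom A u))"
  shows "nat_trans A D \<eta>"
  using assms unfolding nat_trans_def by blast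

lemma cart_sq: "cartesian A D \<eta> \<Longrightarrow> u \<in> Arr A \<Longrightarrow>
   is_pullback D (Fm (NTgt \<eta>) u) (NCmp \<eta> (Cod A u)) (NCmp \<eta> (Dom A u)) (Fm (NSrc \<eta>) u)"
  unfolding cartesian_def by blast

lemma ntrans_eqI:
  fixes x y :: "('ao,'am,'do,'dm) ntrans"
  shows "NSrc x = NSrc y \<Longrightarrow> NTgt x = NTgt y \<Longrightarrow> NCmp x = NCmp y \<Longrightarrow> x = y"
  by (cases x; cases y) simp

locale mainl = A: catl A + D: ofsl D E M
  for A :: "('ao,'am) cat" and D :: "('do,'dm) cat" and E M +
  assumes pbs: "has_pullbacks D"
    and stab: "\<And>f g p q. is_pullback D f g p q \<Longrightarrow> f \<in> E \<Longrightarrow> q \<in> E"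
begin

lemma comp_in:
  assumes e: "\<eta> \<in> Arr (CartNt A D)" and t: "\<theta> \<in> Arr (CartNt A D)" and st: "NTgt \<eta> = NSrc \<theta>"
  shows "Cmp (CartNt A D) \<theta> \<eta> \<in> Arr (CartNt A D)"
proof -
  have ne: "nat_trans A D \<eta>" and ce: "cartesian A D \<eta>" and nt: "nat_trans A D \<theta>" and ct: "cartesian A D \<theta>"
    using e t by auto
  let ?c = "Cmp (CartNt A D) \<theta> \<eta>"
  have cc: "NCmp ?c a = Cmp D (NCmp \<theta> a) (NCmp \<eta> a)" if "a \<in> Obj A" for a using that by simp
  have pb: "is_pullback D (Fm (NTgt \<theta>) u) (NCmp ?c (Cod A u)) (NCmp ?c (Dom A u)) (Fm (NSrc \<eta>) u)"
    if u: "u \<in> Arr A" for u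
  proof -
    have "is_pullback D (Fm (NTgt \<theta>) u) (Cmp D (NCmp \<theta> (Cod A u)) (NCmp \<eta> (Cod A u)))
       (Cmp D (NCmp \<theta> (Dom A u)) (NCmp \<eta> (Dom A u))) (Fm (NSrc \<eta>) u)"
      using D.pb_paste[OF cart_sq[OF ct u], of "NCmp \<eta> (Cod A u)" "NCmp \<eta> (Dom A u)" "Fm (NSrc \<eta>) u"]
        cart_sq[OF ce u] st by simp
    then show ?thesis using u cc by simp
  qed
  have "nat_trans A D ?c"
    proof (rule ntI)
      show "functor A D (NSrc ?c)" using nt_src[OF ne] by simp
      show "functor A D (NTgt ?c)" using nt_tgt[OF nt] by simp
      fix a assume a: "a \<in> Obj A"
      show "NCmp ?c a \<in> Arr D" "Dom D (NCmp ?c a) = Fo (NSrc ?c) a" "Cod D (NCmp ?c a) = Fo (NTgt ?c) a"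
        using a nt_arr[OF ne a] nt_arr[OF nt a] nt_dom[OF ne a] nt_dom[OF nt a] nt_cod[OF ne a] nt_cod[OF nt a] st by auto
    next
      fix a assume "a \<notin> Obj A" then show "NCmp ?c a = undefined" by simp
    next
      fix u assume u: "u \<in> Arr A"
      show "Cmp D (NCmp ?c (Cod A u)) (Fm (NSrc ?c) u) = Cmp D (Fm (NTgt ?c) u) (NCmp ?c (Dom A u))"
        using D.pbD(9)[OF pb[OF u]] by simp
    qed
  moreover have "cartesian A D ?c" unfolding cartesian_def
  proof
    fix u assume u: "u \<in> Arr A"
    have "NTgt ?c = NTgt \<theta>" "NSrc ?c = NSrc \<eta>" by simp_all
    then show "is_pullback D (Fm (NTgt ?c) u) (NCmp ?c (Cod A u)) (NCmp ?c (Dom A u)) (Fm (NSrc ?c) u)"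
      using pb[OF u] by metis
  qed
  ultimately show ?thesis by (simp only: CartNt_simps mem_Collect_eq)
qed


lemma CN_cmp_comp:
  assumes "Cmp (CartNt A D) x y = Cmp (CartNt A D) x' y'" "a \<in> Obj A"
  shows "Cmp D (NCmp x a) (NCmp y a) = Cmp D (NCmp x' a) (NCmp y' a)"
proof -
  from arg_cong[OF assms(1), of NCmp] have "\<And>a. NCmp (Cmp (CartNt A D) x y) a = NCmp (Cmp (CartNt A D) x' y') a" by simp
  from this[of a] show ?thesis using assms(2) by simp
qed

lemma CN_cmp_idn:
  assumes "Cmp (CartNt A D) x y = Idn (CartNt A D) F" "a \<in> Obj A"
  shows "Cmp D (NCmp x a) (NCmp y a) = Idn D (Fo F a)"
proof -
  from arg_cong[OF assms(1), of NCmp] have "\<And>a. NCmp (Cmp (CartNt A D) x y) a = NCmp (Idn (CartNt A D) F) a" by simp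
  from this[of a] show ?thesis using assms(2) by simp
qed

lemma iso_comp:
  assumes "iso (CartNt A D) \<eta>" "a \<in> Obj A"
  shows "iso D (NCmp \<eta> a)"
proof -
  obtain g where g: "g \<in> Arr (CartNt A D)" "NSrc g = NTgt \<eta>" "NTgt g = NSrc \<eta>"
     "Cmp (CartNt A D) g \<eta> = Idn (CartNt A D) (NSrc \<eta>)" "Cmp (CartNt A D) \<eta> g = Idn (CartNt A D) (NTgt \<eta>)"
    and e: "\<eta> \<in> Arr (CartNt A D)"
    using assms(1) unfolding iso_def by auto
  have ne: "nat_trans A D \<eta>" and ng: "nat_trans A D g" using e g by auto
  show ?thesis unfolding iso_def
  proof (intro conjI bexI[of _ "NCmp g a"])
    show "NCmp \<eta> a \<in> Arr D" "NCmp g a \<in> Arr D" using nt_arr[OF ne assms(2)] nt_arr[OF ng assms(2)] .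
    show "Dom D (NCmp g a) = Cod D (NCmp \<eta> a)" "Cod D (NCmp g a) = Dom D (NCmp \<eta> a)"
      using nt_dom[OF ne assms(2)] nt_dom[OF ng assms(2)] nt_cod[OF ne assms(2)] nt_cod[OF ng assms(2)] g(2,3) by simp_all
    show "Cmp D (NCmp g a) (NCmp \<eta> a) = Idn D (Dom D (NCmp \<eta> a))"
      using CN_cmp_idn[OF g(4) assms(2)] nt_dom[OF ne assms(2)] by simp
    show "Cmp D (NCmp \<eta> a) (NCmp g a) = Idn D (Cod D (NCmp \<eta> a))"
      using CN_cmp_idn[OF g(5) assms(2)] nt_cod[OF ne assms(2)] by simp
  qed
qed

lemma lift:
  assumes e: "e \<in> Arr (CartNt A D)" "\<And>a. a \<in> Obj A \<Longrightarrow> NCmp e a \<in> E"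
    and m: "m \<in> Arr (CartNt A D)" "\<And>a. a \<in> Obj A \<Longrightarrow> NCmp m a \<in> M"
    and f: "f \<in> Arr (CartNt A D)" and g: "g \<in> Arr (CartNt A D)"
    and ty: "NSrc f = NSrc e" "NTgt f = NSrc m" "NSrc g = NTgt e" "NTgt g = NTgt m"
    and sq: "Cmp (CartNt A D) g e = Cmp (CartNt A D) m f"
  shows "\<exists>!d. d \<in> Arr (CartNt A D) \<and> NSrc d = NTgt e \<and> NTgt d = NSrc m \<and>
              Cmp (CartNt A D) d e = f \<and> Cmp (CartNt A D) m d = g"
proof -
  have ne: "nat_trans A D e" and ce: "cartesian A D e" and nm: "nat_trans A D m" and cm: "cartesian A D m"
   and nf: "nat_trans A D f" and cf: "cartesian A D f" and ng: "nat_trans A D g" and cg: "cartesian A D g"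
    using e m f g by auto
  define F where "F = NSrc e"
  define F' where "F' = NTgt e"
  define G' where "G' = NSrc m"
  define G where "G = NTgt m"
  have tys: "NSrc e = F" "NTgt e = F'" "NSrc m = G'" "NTgt m = G" "NSrc f = F" "NTgt f = G'" "NSrc g = F'" "NTgt g = G"
    using ty unfolding F_def F'_def G'_def G_def by simp_all
  have fnc: "functor A D F" "functor A D F'" "functor A D G'" "functor A D G"
    using nt_src[OF ne] nt_tgt[OF ne] nt_src[OF nm] nt_tgt[OF nm] tys by simp_all
  have cty: "NCmp e a \<in> Arr D" "Dom D (NCmp e a) = Fo F a" "Cod D (NCmp e a) = Fo F' a"
    "NCmp m a \<in> Arr D" "Dom D (NCmp m a) = Fo G' a" "Cod D (NCmp m a) = Fo G a"
    "NCmp f a \<in> Arr D" "Dom D (NCmp f a) = Fo F a" "Cod D (NCmp f a) = Fo G' a"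
    "NCmp g a \<in> Arr D" "Dom D (NCmp g a) = Fo F' a" "Cod D (NCmp g a) = Fo G a"
    "NCmp e a \<in> E" "NCmp m a \<in> M"
    if a: "a \<in> Obj A" for a
    using nt_arr[OF ne a] nt_dom[OF ne a] nt_cod[OF ne a] nt_arr[OF nm a] nt_dom[OF nm a] nt_cod[OF nm a]
      nt_arr[OF nf a] nt_dom[OF nf a] nt_cod[OF nf a] nt_arr[OF ng a] nt_dom[OF ng a] nt_cod[OF ng a]
      e(2)[OF a] m(2)[OF a] tys by simp_all
  have csq: "Cmp D (NCmp g a) (NCmp e a) = Cmp D (NCmp m a) (NCmp f a)" if a: "a \<in> Obj A" for a
    using CN_cmp_comp[OF sq a] .
  define P where "P a d \<longleftrightarrow> d \<in> Arr D \<and> Dom D d = Fo F' a \<and> Cod D d = Fo G' a \<and>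
       Cmp D d (NCmp e a) = NCmp f a \<and> Cmp D (NCmp m a) d = NCmp g a" for a d
  have Puniq: "d = d'" if "a \<in> Obj A" "P a d" "P a d'" for a d d'
    using D.diag_uniq[of "NCmp e a" "NCmp m a" d d'] that cty[OF that(1)] unfolding P_def by simp
  have Pex: "\<exists>d. P a d" if a: "a \<in> Obj A" for a
  proof -
    obtain d where "d \<in> Arr D" "Dom D d = Cod D (NCmp e a)" "Cod D d = Dom D (NCmp m a)"
      "Cmp D d (NCmp e a) = NCmp f a" "Cmp D (NCmp m a) d = NCmp g a"
      by (rule D.diag_ex[of "NCmp e a" "NCmp m a" "NCmp f a" "NCmp g a"]) (use cty[OF a] csq[OF a] in simp_all)
    then show ?thesis unfolding P_def using cty[OF a] by auto
  qed
  define dc where "dc a = (if a \<in> Obj A then (THE d. P a d) else undefined)" for a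
  have dcP: "P a (dc a)" if a: "a \<in> Obj A" for a
    unfolding dc_def using a theI'[of "P a"] Pex[OF a] Puniq[OF a] by auto
  have dty: "dc a \<in> Arr D" "Dom D (dc a) = Fo F' a" "Cod D (dc a) = Fo G' a"
     "Cmp D (dc a) (NCmp e a) = NCmp f a" "Cmp D (NCmp m a) (dc a) = NCmp g a" if a: "a \<in> Obj A" for a
    using dcP[OF a] unfolding P_def by auto
  define d where "d = \<lparr>NSrc = F', NTgt = G', NCmp = dc\<rparr>"
  have dsel: "NSrc d = F'" "NTgt d = G'" "NCmp d = dc" unfolding d_def by simp_all
  have dnat: "Cmp D (dc (Cod A u)) (Fm F' u) = Cmp D (Fm G' u) (dc (Dom A u))" if u: "u \<in> Arr A" for u
  proof -
    let ?a = "Dom A u" and ?b = "Cod A u"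
    have a: "?a \<in> Obj A" and b: "?b \<in> Obj A" using u by simp_all
    have fty: "Fm X u \<in> Arr D" "Dom D (Fm X u) = Fo X ?a" "Cod D (Fm X u) = Fo X ?b"
      if "functor A D X" for X using fm_arr[OF that u] fm_dom[OF that u] fm_cod[OF that u] by simp_all
    note T = cty[OF a] cty[OF b] dty[OF a] dty[OF b] fty[OF fnc(1)] fty[OF fnc(2)] fty[OF fnc(3)] fty[OF fnc(4)]
    have natE: "Cmp D (NCmp e ?b) (Fm F u) = Cmp D (Fm F' u) (NCmp e ?a)" using nt_nat[OF ne u] tys by simp
    have natM: "Cmp D (NCmp m ?b) (Fm G' u) = Cmp D (Fm G u) (NCmp m ?a)" using nt_nat[OF nm u] tys by simp
    have natF: "Cmp D (NCmp f ?b) (Fm F u) = Cmp D (Fm G' u) (NCmp f ?a)" using nt_nat[OF nf u] tys by simp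
    have natG: "Cmp D (NCmp g ?b) (Fm F' u) = Cmp D (Fm G u) (NCmp g ?a)" using nt_nat[OF ng u] tys by simp
    let ?x1 = "Cmp D (dc ?b) (Fm F' u)" and ?x2 = "Cmp D (Fm G' u) (dc ?a)"
    have 1: "Cmp D ?x1 (NCmp e ?a) = Cmp D ?x2 (NCmp e ?a)"
    proof -
      have "Cmp D ?x1 (NCmp e ?a) = Cmp D (dc ?b) (Cmp D (Fm F' u) (NCmp e ?a))"
        by (rule D.assoc[symmetric]) (use T in simp_all)
      also have "\<dots> = Cmp D (dc ?b) (Cmp D (NCmp e ?b) (Fm F u))" using natE by simp
      also have "\<dots> = Cmp D (Cmp D (dc ?b) (NCmp e ?b)) (Fm F u)" by (rule D.assoc) (use T in simp_all)
      also have "\<dots> = Cmp D (NCmp f ?b) (Fm F u)" using T by simp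
      also have "\<dots> = Cmp D (Fm G' u) (NCmp f ?a)" using natF .
      also have "\<dots> = Cmp D (Fm G' u) (Cmp D (dc ?a) (NCmp e ?a))" using T by simp
      also have "\<dots> = Cmp D ?x2 (NCmp e ?a)" by (rule D.assoc) (use T in simp_all)
      finally show ?thesis .
    qed
    have 2: "Cmp D (NCmp m ?b) ?x1 = Cmp D (NCmp m ?b) ?x2"
    proof -
      have "Cmp D (NCmp m ?b) ?x1 = Cmp D (Cmp D (NCmp m ?b) (dc ?b)) (Fm F' u)"
        by (rule D.assoc) (use T in simp_all)
      also have "\<dots> = Cmp D (NCmp g ?b) (Fm F' u)" using T by simp
      also have "\<dots> = Cmp D (Fm G u) (NCmp g ?a)" using natG .
      also have "\<dots> = Cmp D (Fm G u) (Cmp D (NCmp m ?a) (dc ?a))" using T by simp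
      also have "\<dots> = Cmp D (Cmp D (Fm G u) (NCmp m ?a)) (dc ?a)" by (rule D.assoc) (use T in simp_all)
      also have "\<dots> = Cmp D (Cmp D (NCmp m ?b) (Fm G' u)) (dc ?a)" using natM by simp
      also have "\<dots> = Cmp D (NCmp m ?b) ?x2" by (rule D.assoc[symmetric]) (use T in simp_all)
      finally show ?thesis .
    qed
    show ?thesis
      by (rule D.diag_uniq[of "NCmp e ?a" "NCmp m ?b"]) (use T 1 2 in simp_all)
  qed
  have dN: "nat_trans A D d"
  proof (rule ntI)
    show "functor A D (NSrc d)" "functor A D (NTgt d)" using fnc dsel by simp_all
  next
    fix a assume a: "a \<in> Obj A"
    show "NCmp d a \<in> Arr D" "Dom D (NCmp d a) = Fo (NSrc d) a" "Cod D (NCmp d a) = Fo (NTgt d) a"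
      using dty[OF a] dsel by simp_all
  next
    fix a assume "a \<notin> Obj A" then show "NCmp d a = undefined" using dsel dc_def by simp
  next
    fix u assume "u \<in> Arr A" then show "Cmp D (NCmp d (Cod A u)) (Fm (NSrc d) u) = Cmp D (Fm (NTgt d) u) (NCmp d (Dom A u))"
      using dnat dsel by simp
  qed
  have dC: "cartesian A D d" unfolding cartesian_def
  proof
    fix u assume u: "u \<in> Arr A"
    let ?a = "Dom A u" and ?b = "Cod A u"
    have a: "?a \<in> Obj A" and b: "?b \<in> Obj A" using u by simp_all
    have fty: "Fm X u \<in> Arr D" "Dom D (Fm X u) = Fo X ?a" "Cod D (Fm X u) = Fo X ?b"
      if "functor A D X" for X using fm_arr[OF that u] fm_dom[OF that u] fm_cod[OF that u] by simp_all
    note T = cty[OF a] cty[OF b] dty[OF a] dty[OF b] fty[OF fnc(1)] fty[OF fnc(2)] fty[OF fnc(3)] fty[OF fnc(4)]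
    have bm: "is_pullback D (Fm G u) (NCmp m ?b) (NCmp m ?a) (Fm G' u)" using cart_sq[OF cm u] tys by simp
    have cg': "is_pullback D (Fm G u) (NCmp g ?b) (NCmp g ?a) (Fm F' u)" using cart_sq[OF cg u] tys by simp
    have cg2: "is_pullback D (Fm G u) (Cmp D (NCmp m ?b) (dc ?b)) (Cmp D (NCmp m ?a) (dc ?a)) (Fm F' u)"
      using cg' T by simp
    have "is_pullback D (Fm G' u) (dc ?b) (dc ?a) (Fm F' u)"
      by (rule D.pb_cancel[OF bm cg2]) (use T dnat[OF u] in simp_all)
    then show "is_pullback D (Fm (NTgt d) u) (NCmp d (Cod A u)) (NCmp d (Dom A u)) (Fm (NSrc d) u)"
      using dsel by simp
  qed
  have dA: "d \<in> Arr (CartNt A D)" using dN dC by simp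
  have de: "Cmp (CartNt A D) d e = f"
  proof (rule ntrans_eqI)
    show "NSrc (Cmp (CartNt A D) d e) = NSrc f" "NTgt (Cmp (CartNt A D) d e) = NTgt f" using tys dsel by simp_all
    show "NCmp (Cmp (CartNt A D) d e) = NCmp f"
    proof
      fix a show "NCmp (Cmp (CartNt A D) d e) a = NCmp f a"
        using dty(4)[of a] nt_undef[OF nf, of a] dsel by (cases "a \<in> Obj A") simp_all
    qed
  qed
  have md: "Cmp (CartNt A D) m d = g"
  proof (rule ntrans_eqI)
    show "NSrc (Cmp (CartNt A D) m d) = NSrc g" "NTgt (Cmp (CartNt A D) m d) = NTgt g" using tys dsel by simp_all
    show "NCmp (Cmp (CartNt A D) m d) = NCmp g"
    proof
      fix a show "NCmp (Cmp (CartNt A D) m d) a = NCmp g a"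
        using dty(5)[of a] nt_undef[OF ng, of a] dsel by (cases "a \<in> Obj A") simp_all
    qed
  qed
  show ?thesis
  proof (rule ex1I[of _ d])
    show "d \<in> Arr (CartNt A D) \<and> NSrc d = NTgt e \<and> NTgt d = NSrc m \<and> Cmp (CartNt A D) d e = f \<and> Cmp (CartNt A D) m d = g"
      using dA de md dsel tys by simp
  next
    fix d' assume h: "d' \<in> Arr (CartNt A D) \<and> NSrc d' = NTgt e \<and> NTgt d' = NSrc m \<and> Cmp (CartNt A D) d' e = f \<and> Cmp (CartNt A D) m d' = g"
    then have nd': "nat_trans A D d'" by simp
    show "d' = d"
    proof (rule ntrans_eqI)
      show "NSrc d' = NSrc d" "NTgt d' = NTgt d" using h dsel tys by simp_all
      show "NCmp d' = NCmp d"
      proof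
        fix a show "NCmp d' a = NCmp d a"
        proof (cases "a \<in> Obj A")
          case True
          have e1: "Cmp D (NCmp d' a) (NCmp e a) = NCmp f a"
            using arg_cong[OF conjunct1[OF conjunct2[OF conjunct2[OF conjunct2[OF h]]]], of "\<lambda>x. NCmp x a"] True by simp
          have e2: "Cmp D (NCmp m a) (NCmp d' a) = NCmp g a"
            using arg_cong[OF conjunct2[OF conjunct2[OF conjunct2[OF conjunct2[OF h]]]], of "\<lambda>x. NCmp x a"] True by simp
          have "P a (NCmp d' a)" unfolding P_def
            using nt_arr[OF nd' True] nt_dom[OF nd' True] nt_cod[OF nd' True] h e1 e2 tys by simp
          then show ?thesis using Puniq[OF True _ dcP[OF True]] dsel by simp
        next
          case False then show ?thesis using nt_undef[OF nd' False] dsel dc_def by simp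
        qed
      qed
    qed
  qed
qed

lemma factor:
  assumes eta: "\<eta> \<in> Arr (CartNt A D)"
  shows "\<exists>e m. e \<in> Arr (CartNt A D) \<and> (\<forall>a\<in>Obj A. NCmp e a \<in> E) \<and> m \<in> Arr (CartNt A D) \<and> (\<forall>a\<in>Obj A. NCmp m a \<in> M)
     \<and> NTgt e = NSrc m \<and> Cmp (CartNt A D) m e = \<eta>"
proof -
  have nn: "nat_trans A D \<eta>" and cn: "cartesian A D \<eta>" using eta by auto
  define F where "F = NSrc \<eta>"
  define G where "G = NTgt \<eta>"
  have fF: "functor A D F" and fG: "functor A D G" using nt_src[OF nn] nt_tgt[OF nn] F_def G_def by simp_all
  have nty: "NCmp \<eta> a \<in> Arr D" "Dom D (NCmp \<eta> a) = Fo F a" "Cod D (NCmp \<eta> a) = Fo G a" if "a \<in> Obj A" for a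
    using nt_arr[OF nn that] nt_dom[OF nn that] nt_cod[OF nn that] F_def G_def by simp_all
  have "\<exists>em. fst em \<in> E \<and> snd em \<in> M \<and> Cod D (fst em) = Dom D (snd em) \<and> Cmp D (snd em) (fst em) = NCmp \<eta> a"
    if "a \<in> Obj A" for a
    using D.fact[OF nty(1)[OF that]] by (metis fst_conv snd_conv)
  then obtain em where em: "\<And>a. a \<in> Obj A \<Longrightarrow> fst (em a) \<in> E \<and> snd (em a) \<in> M \<and> Cod D (fst (em a)) = Dom D (snd (em a))
     \<and> Cmp D (snd (em a)) (fst (em a)) = NCmp \<eta> a" by metis
  define ec where "ec a = (if a \<in> Obj A then fst (em a) else undefined)" for a
  define mc where "mc a = (if a \<in> Obj A then snd (em a) else undefined)" for a
  define Ho where "Ho a = (if a \<in> Obj A then Cod D (ec a) else undefined)" for a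
  have ecE: "ec a \<in> E" and mcM: "mc a \<in> M" if "a \<in> Obj A" for a using em[OF that] that ec_def mc_def by auto
  have cty: "ec a \<in> Arr D" "Dom D (ec a) = Fo F a" "Cod D (ec a) = Ho a"
            "mc a \<in> Arr D" "Dom D (mc a) = Ho a" "Cod D (mc a) = Fo G a" "Ho a \<in> Obj D"
            "Cmp D (mc a) (ec a) = NCmp \<eta> a" if a: "a \<in> Obj A" for a
  proof -
    have h: "ec a \<in> E" "mc a \<in> M" "Cod D (ec a) = Dom D (mc a)" "Cmp D (mc a) (ec a) = NCmp \<eta> a"
      using em[OF a] a ec_def mc_def by auto
    have ar: "ec a \<in> Arr D" "mc a \<in> Arr D" using h D.E_arr D.M_arr by auto
    have "Dom D (Cmp D (mc a) (ec a)) = Dom D (ec a)" "Cod D (Cmp D (mc a) (ec a)) = Cod D (mc a)" using ar h(3) by simp_all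
    then show "ec a \<in> Arr D" "Dom D (ec a) = Fo F a" "Cod D (ec a) = Ho a"
            "mc a \<in> Arr D" "Dom D (mc a) = Ho a" "Cod D (mc a) = Fo G a" "Ho a \<in> Obj D"
            "Cmp D (mc a) (ec a) = NCmp \<eta> a"
      using ar h nty[OF a] a Ho_def by auto
  qed
  have fty: "Fm X u \<in> Arr D" "Dom D (Fm X u) = Fo X (Dom A u)" "Cod D (Fm X u) = Fo X (Cod A u)"
      if "functor A D X" "u \<in> Arr A" for X u using fm_arr[OF that] fm_dom[OF that] fm_cod[OF that] by simp_all
  define Q where "Q u d \<longleftrightarrow> d \<in> Arr D \<and> Dom D d = Ho (Dom A u) \<and> Cod D d = Ho (Cod A u) \<and>
      Cmp D d (ec (Dom A u)) = Cmp D (ec (Cod A u)) (Fm F u) \<and> Cmp D (mc (Cod A u)) d = Cmp D (Fm G u) (mc (Dom A u))" for u d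
  have Quniq: "d = d'" if "u \<in> Arr A" "Q u d" "Q u d'" for u d d'
  proof -
    have a: "Dom A u \<in> Obj A" and b: "Cod A u \<in> Obj A" using that by simp_all
    show ?thesis
      using D.diag_uniq[of "ec (Dom A u)" "mc (Cod A u)" d d'] that ecE[OF a] mcM[OF b] cty[OF a] cty[OF b] unfolding Q_def by simp
  qed
  have Qex: "\<exists>d. Q u d" if u: "u \<in> Arr A" for u
  proof -
    let ?a = "Dom A u" and ?b = "Cod A u"
    have a: "?a \<in> Obj A" and b: "?b \<in> Obj A" using u by simp_all
    note T = cty[OF a] cty[OF b] fty[OF fF u] fty[OF fG u]
    have sq: "Cmp D (Cmp D (Fm G u) (mc ?a)) (ec ?a) = Cmp D (mc ?b) (Cmp D (ec ?b) (Fm F u))"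
    proof -
      have "Cmp D (Cmp D (Fm G u) (mc ?a)) (ec ?a) = Cmp D (Fm G u) (Cmp D (mc ?a) (ec ?a))"
        by (rule D.assoc[symmetric]) (use T in simp_all)
      also have "\<dots> = Cmp D (Fm G u) (NCmp \<eta> ?a)" using T by simp
      also have "\<dots> = Cmp D (NCmp \<eta> ?b) (Fm F u)" using nt_nat[OF nn u] F_def G_def by simp
      also have "\<dots> = Cmp D (Cmp D (mc ?b) (ec ?b)) (Fm F u)" using T by simp
      also have "\<dots> = Cmp D (mc ?b) (Cmp D (ec ?b) (Fm F u))" by (rule D.assoc[symmetric]) (use T in simp_all)
      finally show ?thesis .
    qed
    obtain d where "d \<in> Arr D" "Dom D d = Cod D (ec ?a)" "Cod D d = Dom D (mc ?b)"
       "Cmp D d (ec ?a) = Cmp D (ec ?b) (Fm F u)" "Cmp D (mc ?b) d = Cmp D (Fm G u) (mc ?a)"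
      by (rule D.diag_ex[of "ec ?a" "mc ?b" "Cmp D (ec ?b) (Fm F u)" "Cmp D (Fm G u) (mc ?a)"])
         (use T ecE[OF a] mcM[OF b] sq in simp_all)
    then show ?thesis unfolding Q_def using T by auto
  qed
  define Hm where "Hm u = (if u \<in> Arr A then (THE d. Q u d) else undefined)" for u
  have HQ: "Q u (Hm u)" if u: "u \<in> Arr A" for u
    unfolding Hm_def using u theI'[of "Q u"] Qex[OF u] Quniq[OF u] by auto
  have hty: "Hm u \<in> Arr D" "Dom D (Hm u) = Ho (Dom A u)" "Cod D (Hm u) = Ho (Cod A u)"
      "Cmp D (Hm u) (ec (Dom A u)) = Cmp D (ec (Cod A u)) (Fm F u)"
      "Cmp D (mc (Cod A u)) (Hm u) = Cmp D (Fm G u) (mc (Dom A u))" if u: "u \<in> Arr A" for u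
    using HQ[OF u] unfolding Q_def by auto
  define H where "H = \<lparr>Fo = Ho, Fm = Hm\<rparr>"
  have Hsel: "Fo H = Ho" "Fm H = Hm" unfolding H_def by simp_all
  have fH: "functor A D H"
    unfolding functor_def Hsel
  proof (intro conjI ballI allI impI)
    fix a assume a: "a \<in> Obj A"
    show "Ho a \<in> Obj D" using cty[OF a] by simp
    let ?i = "Idn A a"
    have i: "?i \<in> Arr A" "Dom A ?i = a" "Cod A ?i = a" using a by simp_all
    note T = cty[OF a]
    have "Q ?i (Idn D (Ho a))" unfolding Q_def
      using T i fm_idn[OF fF a] fm_idn[OF fG a] fo_obj[OF fF a] fo_obj[OF fG a]
        D.idl[of "ec a"] D.idr[of "ec a"] D.idl[of "mc a"] D.idr[of "mc a"] by simp
    then show "Hm ?i = Idn D (Ho a)" using Quniq[OF i(1) HQ[OF i(1)]] by simp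
  next
    fix a assume "a \<notin> Obj A" then show "Ho a = undefined" using Ho_def by simp
  next
    fix u assume "u \<in> Arr A" then show "Hm u \<in> Arr D" "Dom D (Hm u) = Ho (Dom A u)" "Cod D (Hm u) = Ho (Cod A u)"
      using hty by simp_all
  next
    fix u assume "u \<notin> Arr A" then show "Hm u = undefined" using Hm_def by simp
  next
    fix u v assume u: "u \<in> Arr A" and v: "v \<in> Arr A" and uv: "Cod A u = Dom A v"
    let ?a = "Dom A u" and ?b = "Cod A u" and ?c = "Cod A v"
    have a: "?a \<in> Obj A" and b: "?b \<in> Obj A" and c: "?c \<in> Obj A" using u v by simp_all
    have vu: "Cmp A v u \<in> Arr A" "Dom A (Cmp A v u) = ?a" "Cod A (Cmp A v u) = ?c" using u v uv by simp_all
    have dv: "Dom A v = ?b" using uv by simp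
    note T = cty[OF a] cty[OF b] cty[OF c] fty[OF fF u] fty[OF fG u] fty[OF fF v] fty[OF fG v] hty[OF u] hty[OF v] dv
    have "Q (Cmp A v u) (Cmp D (Hm v) (Hm u))"
      unfolding Q_def vu(2,3)
    proof (intro conjI)
      show "Cmp D (Hm v) (Hm u) \<in> Arr D" "Dom D (Cmp D (Hm v) (Hm u)) = Ho ?a" "Cod D (Cmp D (Hm v) (Hm u)) = Ho ?c"
        using T by simp_all
      have "Cmp D (Cmp D (Hm v) (Hm u)) (ec ?a) = Cmp D (Hm v) (Cmp D (Hm u) (ec ?a))"
        by (rule D.assoc[symmetric]) (use T in simp_all)
      also have "\<dots> = Cmp D (Hm v) (Cmp D (ec ?b) (Fm F u))" using T by simp
      also have "\<dots> = Cmp D (Cmp D (Hm v) (ec ?b)) (Fm F u)" by (rule D.assoc) (use T in simp_all)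
      also have "\<dots> = Cmp D (Cmp D (ec ?c) (Fm F v)) (Fm F u)" using T by simp
      also have "\<dots> = Cmp D (ec ?c) (Cmp D (Fm F v) (Fm F u))" by (rule D.assoc[symmetric]) (use T in simp_all)
      also have "\<dots> = Cmp D (ec ?c) (Fm F (Cmp A v u))" using fm_cmp[OF fF u v uv] by simp
      finally show "Cmp D (Cmp D (Hm v) (Hm u)) (ec ?a) = Cmp D (ec ?c) (Fm F (Cmp A v u))" .
      have "Cmp D (mc ?c) (Cmp D (Hm v) (Hm u)) = Cmp D (Cmp D (mc ?c) (Hm v)) (Hm u)"
        by (rule D.assoc) (use T in simp_all)
      also have "\<dots> = Cmp D (Cmp D (Fm G v) (mc ?b)) (Hm u)" using T by simp
      also have "\<dots> = Cmp D (Fm G v) (Cmp D (mc ?b) (Hm u))" by (rule D.assoc[symmetric]) (use T in simp_all)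
      also have "\<dots> = Cmp D (Fm G v) (Cmp D (Fm G u) (mc ?a))" using T by simp
      also have "\<dots> = Cmp D (Cmp D (Fm G v) (Fm G u)) (mc ?a)" by (rule D.assoc) (use T in simp_all)
      also have "\<dots> = Cmp D (Fm G (Cmp A v u)) (mc ?a)" using fm_cmp[OF fG u v uv] by simp
      finally show "Cmp D (mc ?c) (Cmp D (Hm v) (Hm u)) = Cmp D (Fm G (Cmp A v u)) (mc ?a)" .
    qed
    then show "Hm (Cmp A v u) = Cmp D (Hm v) (Hm u)" using Quniq[OF vu(1) HQ[OF vu(1)]] by simp
  qed

  have msq: "is_pullback D (Fm G u) (mc (Cod A u)) (mc (Dom A u)) (Hm u)" if u: "u \<in> Arr A" for u
  proof -
    let ?a = "Dom A u" and ?b = "Cod A u"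
    have a: "?a \<in> Obj A" and b: "?b \<in> Obj A" using u by simp_all
    note T = cty[OF a] cty[OF b] fty[OF fF u] fty[OF fG u] hty[OF u]
    have "Cod D (Fm G u) = Cod D (mc ?b)" using T by simp
    then obtain m' p where P: "is_pullback D (Fm G u) (mc ?b) m' p"
      using pbs T unfolding has_pullbacks_def by blast
    note PB = D.pbD[OF P]
    have pty: "m' \<in> Arr D" "p \<in> Arr D" "Dom D p = Dom D m'" "Cod D m' = Fo G ?a" "Cod D p = Ho ?b"
      using PB T by auto
    note T2 = T pty
    have nsq: "is_pullback D (Fm G u) (NCmp \<eta> ?b) (NCmp \<eta> ?a) (Fm F u)"
      using cart_sq[OF cn u] F_def G_def by simp
    have nsq2: "is_pullback D (Fm G u) (Cmp D (mc ?b) (ec ?b)) (Cmp D (mc ?a) (ec ?a)) (Fm F u)"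
      using nsq T by simp
    have eq1: "Cmp D (Fm G u) (NCmp \<eta> ?a) = Cmp D (mc ?b) (Cmp D (ec ?b) (Fm F u))"
    proof -
      have "Cmp D (Fm G u) (NCmp \<eta> ?a) = Cmp D (NCmp \<eta> ?b) (Fm F u)" using nt_nat[OF nn u] F_def G_def by simp
      also have "\<dots> = Cmp D (Cmp D (mc ?b) (ec ?b)) (Fm F u)" using T by simp
      also have "\<dots> = Cmp D (mc ?b) (Cmp D (ec ?b) (Fm F u))" by (rule D.assoc[symmetric]) (use T in simp_all)
      finally show ?thesis .
    qed
    obtain e' where e': "e' \<in> Arr D" "Dom D e' = Dom D (NCmp \<eta> ?a)" "Cod D e' = Dom D m'"
       "Cmp D m' e' = NCmp \<eta> ?a" "Cmp D p e' = Cmp D (ec ?b) (Fm F u)"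
      by (rule D.pb_ex[OF P, of "NCmp \<eta> ?a" "Cmp D (ec ?b) (Fm F u)"]) (use T nty[OF a] eq1 in simp_all)
    have ety: "e' \<in> Arr D" "Dom D e' = Fo F ?a" "Cod D e' = Dom D m'" using e' nty[OF a] by simp_all
    have top: "is_pullback D p (ec ?b) e' (Fm F u)"
      by (rule D.pb_cancel[OF P]) (use nsq2 T2 ety e'(4,5) in simp_all)
    have e'E: "e' \<in> E" using stab[OF D.pb_sym[OF top] ecE[OF b]] .
    obtain k where k: "k \<in> Arr D" "Dom D k = Dom D (mc ?a)" "Cod D k = Dom D m'" "Cmp D m' k = mc ?a" "Cmp D p k = Hm u"
      by (rule D.pb_ex[OF P, of "mc ?a" "Hm u"]) (use T hty[OF u] in simp_all)
    have kty: "k \<in> Arr D" "Dom D k = Ho ?a" "Cod D k = Dom D m'" using k T by simp_all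
    have ke: "Cmp D k (ec ?a) = e'"
    proof (rule D.pb_uniq[OF P])
      have "Cmp D m' (Cmp D k (ec ?a)) = Cmp D (Cmp D m' k) (ec ?a)" by (rule D.assoc) (use T2 kty in simp_all)
      also have "\<dots> = NCmp \<eta> ?a" using k(4) T by simp
      finally show "Cmp D m' (Cmp D k (ec ?a)) = Cmp D m' e'" using e'(4) by simp
      have "Cmp D p (Cmp D k (ec ?a)) = Cmp D (Cmp D p k) (ec ?a)" by (rule D.assoc) (use T2 kty in simp_all)
      also have "\<dots> = Cmp D (ec ?b) (Fm F u)" using k(5) T by simp
      finally show "Cmp D p (Cmp D k (ec ?a)) = Cmp D p e'" using e'(5) by simp
    qed (use T2 kty ety in simp_all)
    obtain l where l: "l \<in> Arr D" "Dom D l = Cod D e'" "Cod D l = Dom D (mc ?a)" "Cmp D l e' = ec ?a" "Cmp D (mc ?a) l = m'"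
      by (rule D.diag_ex[of e' "mc ?a" "ec ?a" m']) (use e'E mcM[OF a] T2 ety e'(4) in simp_all)
    have lty: "l \<in> Arr D" "Dom D l = Dom D m'" "Cod D l = Ho ?a" using l ety T by simp_all
    have Hl: "Cmp D (Hm u) l = p"
    proof (rule D.diag_uniq[of e' "mc ?b"])
      have "Cmp D (Cmp D (Hm u) l) e' = Cmp D (Hm u) (Cmp D l e')" by (rule D.assoc[symmetric]) (use T2 lty ety in simp_all)
      also have "\<dots> = Cmp D (ec ?b) (Fm F u)" using l(4) T by simp
      finally show "Cmp D (Cmp D (Hm u) l) e' = Cmp D p e'" using e'(5) by simp
      have "Cmp D (mc ?b) (Cmp D (Hm u) l) = Cmp D (Cmp D (mc ?b) (Hm u)) l" by (rule D.assoc) (use T2 lty in simp_all)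
      also have "\<dots> = Cmp D (Cmp D (Fm G u) (mc ?a)) l" using T by simp
      also have "\<dots> = Cmp D (Fm G u) (Cmp D (mc ?a) l)" by (rule D.assoc[symmetric]) (use T2 lty in simp_all)
      also have "\<dots> = Cmp D (Fm G u) m'" using l(5) by simp
      finally show "Cmp D (mc ?b) (Cmp D (Hm u) l) = Cmp D (mc ?b) p" using PB(9) by simp
    qed (use e'E mcM[OF b] T2 lty ety in simp_all)
    have kl: "Cmp D k l = Idn D (Dom D m')"
    proof (rule D.pb_uniq[OF P])
      have "Cmp D m' (Cmp D k l) = Cmp D (Cmp D m' k) l" by (rule D.assoc) (use T2 kty lty in simp_all)
      also have "\<dots> = m'" using k(4) l(5) by simp
      finally show "Cmp D m' (Cmp D k l) = Cmp D m' (Idn D (Dom D m'))" using D.idr[of m'] T2 by simp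
      have "Cmp D p (Cmp D k l) = Cmp D (Cmp D p k) l" by (rule D.assoc) (use T2 kty lty in simp_all)
      also have "\<dots> = p" using k(5) Hl by simp
      finally show "Cmp D p (Cmp D k l) = Cmp D p (Idn D (Dom D m'))" using D.idr[of p] T2 by simp
    qed (use T2 kty lty in simp_all)
    have lk: "Cmp D l k = Idn D (Ho ?a)"
    proof (rule D.diag_uniq[of "ec ?a" "mc ?a"])
      have "Cmp D (Cmp D l k) (ec ?a) = Cmp D l (Cmp D k (ec ?a))" by (rule D.assoc[symmetric]) (use T2 kty lty in simp_all)
      also have "\<dots> = ec ?a" using ke l(4) by simp
      finally show "Cmp D (Cmp D l k) (ec ?a) = Cmp D (Idn D (Ho ?a)) (ec ?a)" using D.idl[of "ec ?a"] T2 by simp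
      have "Cmp D (mc ?a) (Cmp D l k) = Cmp D (Cmp D (mc ?a) l) k" by (rule D.assoc) (use T2 kty lty in simp_all)
      also have "\<dots> = mc ?a" using k(4) l(5) by simp
      finally show "Cmp D (mc ?a) (Cmp D l k) = Cmp D (mc ?a) (Idn D (Ho ?a))" using D.idr[of "mc ?a"] T2 by simp
    qed (use ecE[OF a] mcM[OF a] T2 kty lty in simp_all)
    have "is_pullback D (Fm G u) (mc ?b) (Cmp D m' k) (Cmp D p k)"
      by (rule D.pb_iso[OF P, of k l]) (use T2 kty lty kl lk in simp_all)
    then show ?thesis using k(4,5) by simp
  qed
  have esq: "is_pullback D (Hm u) (ec (Cod A u)) (ec (Dom A u)) (Fm F u)" if u: "u \<in> Arr A" for u
  proof -
    let ?a = "Dom A u" and ?b = "Cod A u"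
    have a: "?a \<in> Obj A" and b: "?b \<in> Obj A" using u by simp_all
    note T = cty[OF a] cty[OF b] fty[OF fF u] fty[OF fG u] hty[OF u]
    have nsq2: "is_pullback D (Fm G u) (Cmp D (mc ?b) (ec ?b)) (Cmp D (mc ?a) (ec ?a)) (Fm F u)"
      using cart_sq[OF cn u] F_def G_def T by simp
    show ?thesis
      by (rule D.pb_cancel[OF msq[OF u] nsq2]) (use T in simp_all)
  qed
  define e where "e = \<lparr>NSrc = F, NTgt = H, NCmp = ec\<rparr>"
  define m where "m = \<lparr>NSrc = H, NTgt = G, NCmp = mc\<rparr>"
  have esel: "NSrc e = F" "NTgt e = H" "NCmp e = ec" and msel: "NSrc m = H" "NTgt m = G" "NCmp m = mc"
    unfolding e_def m_def by simp_all
  have eA: "e \<in> Arr (CartNt A D)"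
  proof -
    have "nat_trans A D e"
    proof (rule ntI)
      show "functor A D (NSrc e)" "functor A D (NTgt e)" using fF fH esel by simp_all
    next
      fix a assume a: "a \<in> Obj A"
      show "NCmp e a \<in> Arr D" "Dom D (NCmp e a) = Fo (NSrc e) a" "Cod D (NCmp e a) = Fo (NTgt e) a"
        using cty[OF a] esel Hsel by simp_all
    next
      fix a assume "a \<notin> Obj A" then show "NCmp e a = undefined" using esel ec_def by simp
    next
      fix u assume "u \<in> Arr A" then show "Cmp D (NCmp e (Cod A u)) (Fm (NSrc e) u) = Cmp D (Fm (NTgt e) u) (NCmp e (Dom A u))"
        using D.pbD(9)[OF esq] esel Hsel by simp
    qed
    moreover have "cartesian A D e" unfolding cartesian_def using esq esel Hsel by simp
    ultimately show ?thesis by simp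
  qed
  have mA: "m \<in> Arr (CartNt A D)"
  proof -
    have "nat_trans A D m"
    proof (rule ntI)
      show "functor A D (NSrc m)" "functor A D (NTgt m)" using fG fH msel by simp_all
    next
      fix a assume a: "a \<in> Obj A"
      show "NCmp m a \<in> Arr D" "Dom D (NCmp m a) = Fo (NSrc m) a" "Cod D (NCmp m a) = Fo (NTgt m) a"
        using cty[OF a] msel Hsel by simp_all
    next
      fix a assume "a \<notin> Obj A" then show "NCmp m a = undefined" using msel mc_def by simp
    next
      fix u assume "u \<in> Arr A" then show "Cmp D (NCmp m (Cod A u)) (Fm (NSrc m) u) = Cmp D (Fm (NTgt m) u) (NCmp m (Dom A u))"
        using hty msel Hsel by simp
    qed
    moreover have "cartesian A D m" unfolding cartesian_def using msq msel Hsel by simp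
    ultimately show ?thesis by simp
  qed
  have me: "Cmp (CartNt A D) m e = \<eta>"
  proof (rule ntrans_eqI)
    show "NSrc (Cmp (CartNt A D) m e) = NSrc \<eta>" "NTgt (Cmp (CartNt A D) m e) = NTgt \<eta>" using esel msel F_def G_def by simp_all
    show "NCmp (Cmp (CartNt A D) m e) = NCmp \<eta>"
    proof
      fix a show "NCmp (Cmp (CartNt A D) m e) a = NCmp \<eta> a"
        using cty(8)[of a] nt_undef[OF nn, of a] esel msel by (cases "a \<in> Obj A") simp_all
    qed
  qed
  show ?thesis
    apply (rule exI[of _ e], rule exI[of _ m])
    using eA mA me esel msel ecE mcM by simp
qed
end

theorem lemma4p7:
  fixes A :: "('ao, 'am) cat" and D :: "('do, 'dm) cat"
    and E M :: "'dm set"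
  assumes "category A" and "category D" and "has_pullbacks D"
    and "stable_ofs D E M"
  shows "ofs (CartNt A D) (lift_class A E \<inter> Arr (CartNt A D)) (lift_class A M \<inter> Arr (CartNt A D))"
proof -
  have o: "ofs D E M" and st: "\<And>f g p q. is_pullback D f g p q \<Longrightarrow> f \<in> E \<Longrightarrow> q \<in> E"
    using assms(4) unfolding stable_ofs_def by blast+
  interpret mainl A D E M
    by (unfold_locales) (use assms(1-3) o st in auto)
  let ?C = "CartNt A D"
  have comp_comp: "NCmp (Cmp ?C g f) a = Cmp D (NCmp g a) (NCmp f a)" if "a \<in> Obj A" for f g a
    using that by simp
  have ctyp: "NCmp f a \<in> Arr D" "Dom D (NCmp f a) = Fo (NSrc f) a" "Cod D (NCmp f a) = Fo (NTgt f) a"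
    if "f \<in> Arr ?C" "a \<in> Obj A" for f a
    using nt_arr[of A D f a] nt_dom[of A D f a] nt_cod[of A D f a] that by auto
  show ?thesis
    unfolding ofs_def
  proof (intro conjI)
    show "lift_class A E \<inter> Arr ?C \<subseteq> Arr ?C" "lift_class A M \<inter> Arr ?C \<subseteq> Arr ?C" by auto
    show "\<forall>f. iso ?C f \<longrightarrow> f \<in> lift_class A E \<inter> Arr ?C"
      using iso_comp D.iso_E unfolding lift_class_def iso_def[of ?C] by blast
    show "\<forall>f. iso ?C f \<longrightarrow> f \<in> lift_class A M \<inter> Arr ?C"
      using iso_comp D.iso_M unfolding lift_class_def iso_def[of ?C] by blast
    show "\<forall>f\<in>lift_class A E \<inter> Arr ?C. \<forall>g\<in>lift_class A E \<inter> Arr ?C. Cod ?C f = Dom ?C g \<longrightarrow> Cmp ?C g f \<in> lift_class A E \<inter> Arr ?C"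
    proof (intro ballI impI)
      fix f g assume f: "f \<in> lift_class A E \<inter> Arr ?C" and g: "g \<in> lift_class A E \<inter> Arr ?C" and fg: "Cod ?C f = Dom ?C g"
      have fg': "NTgt f = NSrc g" using fg by simp
      have "Cmp ?C g f \<in> Arr ?C" using comp_in[of f g] f g fg' by blast
      moreover have "Cmp ?C g f \<in> lift_class A E" unfolding lift_class_def
      proof (rule CollectI, rule ballI)
        fix a assume a: "a \<in> Obj A"
        have "Cmp D (NCmp g a) (NCmp f a) \<in> E"
          using D.E_comp[of "NCmp f a" "NCmp g a"] f g a ctyp[of f a] ctyp[of g a] fg' unfolding lift_class_def by auto
        then show "NCmp (Cmp ?C g f) a \<in> E" using comp_comp[OF a] by simp
      qed
      ultimately show "Cmp ?C g f \<in> lift_class A E \<inter> Arr ?C" by blast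
    qed
    show "\<forall>f\<in>lift_class A M \<inter> Arr ?C. \<forall>g\<in>lift_class A M \<inter> Arr ?C. Cod ?C f = Dom ?C g \<longrightarrow> Cmp ?C g f \<in> lift_class A M \<inter> Arr ?C"
    proof (intro ballI impI)
      fix f g assume f: "f \<in> lift_class A M \<inter> Arr ?C" and g: "g \<in> lift_class A M \<inter> Arr ?C" and fg: "Cod ?C f = Dom ?C g"
      have fg': "NTgt f = NSrc g" using fg by simp
      have "Cmp ?C g f \<in> Arr ?C" using comp_in[of f g] f g fg' by blast
      moreover have "Cmp ?C g f \<in> lift_class A M" unfolding lift_class_def
      proof (rule CollectI, rule ballI)
        fix a assume a: "a \<in> Obj A"
        have "Cmp D (NCmp g a) (NCmp f a) \<in> M"
          using D.M_comp[of "NCmp f a" "NCmp g a"] f g a ctyp[of f a] ctyp[of g a] fg' unfolding lift_class_def by auto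
        then show "NCmp (Cmp ?C g f) a \<in> M" using comp_comp[OF a] by simp
      qed
      ultimately show "Cmp ?C g f \<in> lift_class A M \<inter> Arr ?C" by blast
    qed
    show "\<forall>e\<in>lift_class A E \<inter> Arr ?C. \<forall>m\<in>lift_class A M \<inter> Arr ?C. \<forall>f\<in>Arr ?C. \<forall>g\<in>Arr ?C.
        Dom ?C f = Dom ?C e \<longrightarrow> Cod ?C f = Dom ?C m \<longrightarrow> Dom ?C g = Cod ?C e \<longrightarrow> Cod ?C g = Cod ?C m \<longrightarrow>
        Cmp ?C g e = Cmp ?C m f \<longrightarrow>
        (\<exists>!d. d \<in> Arr ?C \<and> Dom ?C d = Cod ?C e \<and> Cod ?C d = Dom ?C m \<and>
              Cmp ?C d e = f \<and> Cmp ?C m d = g)"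
    proof (intro ballI impI)
      fix e m f g assume e: "e \<in> lift_class A E \<inter> Arr ?C" and m: "m \<in> lift_class A M \<inter> Arr ?C"
        and f: "f \<in> Arr ?C" and g: "g \<in> Arr ?C" and t1: "Dom ?C f = Dom ?C e" and t2: "Cod ?C f = Dom ?C m"
        and t3: "Dom ?C g = Cod ?C e" and t4: "Cod ?C g = Cod ?C m" and sq: "Cmp ?C g e = Cmp ?C m f"
      have "\<exists>!d. d \<in> Arr ?C \<and> NSrc d = NTgt e \<and> NTgt d = NSrc m \<and> Cmp ?C d e = f \<and> Cmp ?C m d = g"
        by (rule lift) (use e m f g t1 t2 t3 t4 sq in \<open>auto simp: lift_class_def simp del: CartNt_simps(5)\<close>)
      then show "\<exists>!d. d \<in> Arr ?C \<and> Dom ?C d = Cod ?C e \<and> Cod ?C d = Dom ?C m \<and> Cmp ?C d e = f \<and> Cmp ?C m d = g"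
        by (simp only: CartNt_simps(3,4))
    qed
    show "\<forall>f\<in>Arr ?C. \<exists>e\<in>lift_class A E \<inter> Arr ?C. \<exists>m\<in>lift_class A M \<inter> Arr ?C. Cod ?C e = Dom ?C m \<and> Cmp ?C m e = f"
    proof
      fix f assume f: "f \<in> Arr ?C"
      obtain e m where "e \<in> Arr ?C" "\<forall>a\<in>Obj A. NCmp e a \<in> E" "m \<in> Arr ?C" "\<forall>a\<in>Obj A. NCmp m a \<in> M"
        "NTgt e = NSrc m" "Cmp ?C m e = f"
        using factor[OF f] by blast
      then show "\<exists>e\<in>lift_class A E \<inter> Arr ?C. \<exists>m\<in>lift_class A M \<inter> Arr ?C. Cod ?C e = Dom ?C m \<and> Cmp ?C m e = f"
        unfolding lift_class_def by (intro bexI[of _ e] bexI[of _ m]) (simp_all only: CartNt_simps(3,4) Int_iff mem_Collect_eq)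
    qed
  qed
qed


end
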